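(* For every integer $k\geq1$, as identities of rational functions in the indeterminates $a,b,q$, $$\sum_{r=1}^{k}(-1)^{k-r}\sum_{\substack{k_1+\cdots+k_r=k\\ k_i\geq1}}\ \prod_{i=1}^{r}\prod_{j=1}^{k_i}\frac{a-bq^{j-1}}{1-q^j}=\prod_{i=1}^{k}\frac{aq^{i-1}-b}{1-q^i} \quad\text{and}\quad \sum_{r=1}^{k}(-1)^{k-r}\sum_{\substack{k_1+\cdots+k_r=k\\ k_i\geq1}}\ \prod_{i=1}^{r}\prod_{j=1}^{k_i}\frac{aq^{j-1}-b}{1-q^j}=\prod_{i=1}^{k}\frac{a-bq^{i-1}}{1-q^i},$$ where the inner sums run over all ordered $r$-tuples of positive integers with sum $k$. *)

theory Defs
  imports Main
begin

definition compositions :: "nat \<Rightarrow> nat \<Rightarrow> nat list set" where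
  "compositions k r = {ks. length ks = r \<and> (\<forall>x\<in>set ks. x \<ge> 1) \<and> sum_list ks = k}"

end

theory Submission
  imports Defs
begin

definition PP :: "'a::field \<Rightarrow> 'a \<Rightarrow> 'a \<Rightarrow> nat \<Rightarrow> 'a" where
  "PP q a b m = (\<Prod>j=1..m. (a - b * q ^ (j - 1)) / (1 - q ^ j))"

lemma PP_0[simp]: "PP q a b 0 = 1" by (simp add: PP_def)

lemma PP_Suc: "PP q a b (Suc m) = PP q a b m * ((a - b * q ^ m) / (1 - q ^ Suc m))"
  by (simp add: PP_def prod.cl_ivl_Suc)

lemma PP_rec: "1 - q ^ Suc m \<noteq> 0 \<Longrightarrow> (1 - q ^ Suc m) * PP q a b (Suc m) = (a - b * q ^ m) * PP q a b m"
  by (simp add: PP_Suc)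

definition CC :: "'a::field \<Rightarrow> 'a \<Rightarrow> 'a \<Rightarrow> nat \<Rightarrow> 'a" where
  "CC q a b k = (\<Sum>m\<le>k. PP q a b m * PP q b a (k - m))"

lemma CC_step:
  assumes nz: "\<And>j. 1 \<le> j \<Longrightarrow> j \<le> Suc n \<Longrightarrow> 1 - q ^ j \<noteq> (0::'a::field)"
  shows "(1 - q ^ Suc n) * CC q a b (Suc n) = a * (1 - q ^ n) * CC q a b n"
proof -
  have split: "(1 - q ^ Suc n) * CC q a b (Suc n) =
      (\<Sum>m\<le>Suc n. (1 - q ^ m) * PP q a b m * PP q b a (Suc n - m))
    + (\<Sum>m\<le>Suc n. q ^ m * PP q a b m * ((1 - q ^ (Suc n - m)) * PP q b a (Suc n - m)))"
    unfolding CC_def sum_distrib_left sum.distrib[symmetric]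
  proof (rule sum.cong[OF refl])
    fix m assume "m \<in> {..Suc n}"
    hence "q ^ m * q ^ (Suc n - m) = q ^ Suc n" by (simp add: power_add[symmetric])
    thus "(1 - q ^ Suc n) * (PP q a b m * PP q b a (Suc n - m)) =
      (1 - q ^ m) * PP q a b m * PP q b a (Suc n - m) +
      q ^ m * PP q a b m * ((1 - q ^ (Suc n - m)) * PP q b a (Suc n - m))"
      by (simp add: algebra_simps)
  qed
  have s1: "(\<Sum>m\<le>Suc n. (1 - q ^ m) * PP q a b m * PP q b a (Suc n - m))
      = (\<Sum>i\<le>n. (a - b * q ^ i) * PP q a b i * PP q b a (n - i))"
    unfolding sum.atMost_Suc_shift
    apply simp
    apply (rule sum.cong[OF refl])
    subgoal for i
      using PP_rec[of q i a b] nz[of "Suc i"] by (simp add: mult.assoc)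
    done
  have s2: "(\<Sum>m\<le>Suc n. q ^ m * PP q a b m * ((1 - q ^ (Suc n - m)) * PP q b a (Suc n - m)))
      = (\<Sum>i\<le>n. q ^ i * (b - a * q ^ (n - i)) * PP q a b i * PP q b a (n - i))"
    unfolding sum.atMost_Suc
  proof (simp, rule sum.cong[OF refl])
    fix i assume i: "i \<in> {..n}"
    hence e: "Suc n - i = Suc (n - i)" by auto
    have "1 - q ^ Suc (n - i) \<noteq> 0" using nz[of "Suc (n-i)"] i by auto
    thus "q ^ i * PP q a b i * ((1 - q ^ (Suc n - i)) * PP q b a (Suc n - i)) =
         q ^ i * (b - a * q ^ (n - i)) * PP q a b i * PP q b a (n - i)"
      unfolding e using PP_rec[of q "n - i" b a] by (simp add: mult.assoc)
  qed
  have "(1 - q ^ Suc n) * CC q a b (Suc n) =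
     (\<Sum>i\<le>n. ((a - b * q ^ i) + q ^ i * (b - a * q ^ (n - i))) * PP q a b i * PP q b a (n - i))"
    unfolding split s1 s2 sum.distrib[symmetric] by (rule sum.cong) (auto simp: algebra_simps)
  also have "\<dots> = (\<Sum>i\<le>n. a * (1 - q ^ n) * (PP q a b i * PP q b a (n - i)))"
  proof (rule sum.cong[OF refl])
    fix i assume "i \<in> {..n}"
    hence "q ^ i * q ^ (n - i) = q ^ n" by (simp add: power_add[symmetric])
    thus "((a - b * q ^ i) + q ^ i * (b - a * q ^ (n - i))) * PP q a b i * PP q b a (n - i) =
       a * (1 - q ^ n) * (PP q a b i * PP q b a (n - i))"
      by (simp add: algebra_simps)
  qed
  also have "\<dots> = a * (1 - q ^ n) * CC q a b n" by (simp add: CC_def sum_distrib_left)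
  finally show ?thesis .
qed

lemma CC_zero:
  assumes nz: "\<And>j. 1 \<le> j \<Longrightarrow> j \<le> K \<Longrightarrow> 1 - q ^ j \<noteq> (0::'a::field)"
  shows "1 \<le> k \<Longrightarrow> k \<le> K \<Longrightarrow> CC q a b k = 0"
proof (induction k)
  case 0 thus ?case by simp
next
  case (Suc n)
  have st: "(1 - q ^ Suc n) * CC q a b (Suc n) = a * (1 - q ^ n) * CC q a b n"
    by (rule CC_step) (use nz Suc.prems in auto)
  have "a * (1 - q ^ n) * CC q a b n = 0"
  proof (cases n)
    case 0 thus ?thesis by simp
  next
    case (Suc m) thus ?thesis using Suc.IH Suc.prems by simp
  qed
  moreover have "1 - q ^ Suc n \<noteq> 0" using nz[of "Suc n"] Suc.prems by simp
  ultimately show ?case using st by (metis mult_eq_0_iff)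
qed



lemma comp_finite: "finite (compositions k r)"
proof (rule finite_subset)
  show "compositions k r \<subseteq> {xs. set xs \<subseteq> {..k} \<and> length xs = r}"
    by (auto simp: compositions_def dest: member_le_sum_list)
  show "finite {xs. set xs \<subseteq> {..k} \<and> length xs = r}"
    by (rule finite_lists_length_eq) simp
qed

lemma comp_0: "compositions k 0 = (if k = 0 then {[]} else {})"
  by (auto simp: compositions_def)

lemma comp_len: "ks \<in> compositions k r \<Longrightarrow> r \<le> k"
proof -
  assume "ks \<in> compositions k r"
  hence "length ks = r" "\<forall>x\<in>set ks. x \<ge> 1" "sum_list ks = k" by (auto simp: compositions_def)
  moreover have "\<forall>x\<in>set ks. x \<ge> 1 \<Longrightarrow> length ks \<le> sum_list ks"
    by (induction ks) auto
  ultimately show ?thesis by simp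
qed

lemma comp_big: "k < r \<Longrightarrow> compositions k r = {}"
  using comp_len by fastforce

lemma comp_Suc: "compositions k (Suc r) = (\<Union>m\<in>{1..k}. (\<lambda>ks. m # ks) ` compositions (k - m) r)"
proof
  show "compositions k (Suc r) \<subseteq> (\<Union>m\<in>{1..k}. (\<lambda>ks. m # ks) ` compositions (k - m) r)"
  proof
    fix xs assume "xs \<in> compositions k (Suc r)"
    then obtain m ys where xs: "xs = m # ys" and "length ys = r" "m \<ge> 1" "\<forall>x\<in>set ys. x \<ge> 1"
      "m + sum_list ys = k"
      by (auto simp: compositions_def length_Suc_conv)
    thus "xs \<in> (\<Union>m\<in>{1..k}. (\<lambda>ks. m # ks) ` compositions (k - m) r)"
      by (intro UN_I[of m]) (auto simp: compositions_def)
  qed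
  show "(\<Union>m\<in>{1..k}. (\<lambda>ks. m # ks) ` compositions (k - m) r) \<subseteq> compositions k (Suc r)"
    by (auto simp: compositions_def)
qed

lemma comp_sum_Suc:
  "(\<Sum>ks\<in>compositions k (Suc r). h ks) = (\<Sum>m=1..k. \<Sum>ks\<in>compositions (k - m) r. h (m # ks))"
  unfolding comp_Suc
  by (subst sum.UNION_disjoint) (auto simp: comp_finite sum.reindex)

definition SS :: "(nat \<Rightarrow> 'a::field) \<Rightarrow> nat \<Rightarrow> nat \<Rightarrow> 'a" where
  "SS g n r = (\<Sum>ks\<in>compositions n r. prod_list (map g ks))"

definition TT :: "(nat \<Rightarrow> 'a::field) \<Rightarrow> nat \<Rightarrow> 'a" where
  "TT g n = (\<Sum>r\<le>n. SS g n r)"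

lemma TT_ext: "n \<le> N \<Longrightarrow> (\<Sum>r\<le>N. SS g n r) = TT g n"
proof (induction N rule: dec_induct)
  case base thus ?case by (simp add: TT_def)
next
  case (step N) thus ?case by (simp add: SS_def comp_big)
qed

lemma TT_0: "TT g 0 = 1" by (simp add: TT_def SS_def comp_0)

lemma TT_rec: "1 \<le> k \<Longrightarrow> TT g k = (\<Sum>m=1..k. g m * TT g (k - m))"
proof -
  assume k: "1 \<le> k"
  then obtain n where n: "k = Suc n" by (cases k) auto
  have "TT g k = (\<Sum>r\<le>n. SS g k (Suc r))"
    unfolding TT_def n sum.atMost_Suc_shift by (simp add: SS_def comp_0)
  also have "\<dots> = (\<Sum>r\<le>n. \<Sum>m=1..k. g m * SS g (k - m) r)"
    by (simp add: SS_def comp_sum_Suc sum_distrib_left)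
  also have "\<dots> = (\<Sum>m=1..k. g m * (\<Sum>r\<le>n. SS g (k - m) r))"
    by (subst sum.swap) (simp add: sum_distrib_left)
  also have "\<dots> = (\<Sum>m=1..k. g m * TT g (k - m))"
    by (rule sum.cong[OF refl]) (subst TT_ext, auto simp: n)
  finally show ?thesis .
qed

lemma generic:
  fixes A B :: "nat \<Rightarrow> 'a::field"
  assumes "B 0 = 1" and A0: "A 0 = 1"
    and h: "\<And>k. 1 \<le> k \<Longrightarrow> k \<le> K \<Longrightarrow> (\<Sum>m\<le>k. (-1) ^ m * A m * B (k - m)) = 0"
  shows "k \<le> K \<Longrightarrow> TT (\<lambda>m. (-1) ^ (m - 1) * A m) k = B k"
proof (induction k rule: less_induct)
  case (less k)
  show ?case
  proof (cases "k = 0")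
    case True thus ?thesis using assms(1) TT_0 by simp
  next
    case False
    hence k: "1 \<le> k" by simp
    have e: "{..k} = insert 0 {1..k}" by auto
    have "B k + (\<Sum>m=1..k. (-1) ^ m * A m * B (k - m)) = 0"
      using h[OF k less.prems] A0 unfolding e by simp
    moreover have "(\<Sum>m=1..k. (-1) ^ m * A m * B (k - m)) = - (\<Sum>m=1..k. (-1) ^ (m - 1) * A m * B (k - m))"
      unfolding sum_negf[symmetric]
    proof (rule sum.cong[OF refl])
      fix m :: nat assume "m \<in> {1..k}"
      then obtain p where "m = Suc p" by (cases m) auto
      thus "(-1) ^ m * A m * B (k - m) = - ((-1) ^ (m - 1) * A m * B (k - m))" by simp
    qed
    ultimately have Bk: "B k = (\<Sum>m=1..k. (-1) ^ (m - 1) * A m * B (k - m))"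
      by (simp add: add_eq_0_iff)
    have "TT (\<lambda>m. (-1) ^ (m - 1) * A m) k = (\<Sum>m=1..k. (-1) ^ (m - 1) * A m * TT (\<lambda>m. (-1) ^ (m - 1) * A m) (k - m))"
      using TT_rec[OF k] by simp
    also have "\<dots> = (\<Sum>m=1..k. (-1) ^ (m - 1) * A m * B (k - m))"
      by (rule sum.cong[OF refl]) (subst less.IH, use less.prems in auto)
    finally show ?thesis using Bk by simp
  qed
qed

lemma prod_nth: "(\<Prod>i<length xs. f (xs ! i)) = prod_list (map f xs)"
  by (induction xs) (simp_all del: prod.lessThan_Suc add: prod.lessThan_Suc_shift)

lemma sign_list:
  fixes f :: "nat \<Rightarrow> 'a::field"
  shows "\<forall>x\<in>set ks. x \<ge> 1 \<Longrightarrow>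
    (-1) ^ length ks * prod_list (map (\<lambda>m. (-1) ^ (m - 1) * f m) ks) = (-1) ^ sum_list ks * prod_list (map f ks)"
proof (induction ks)
  case Nil thus ?case by simp
next
  case (Cons x ks)
  then obtain p where x: "x = Suc p" by (cases x) auto
  show ?case using Cons by (simp add: x power_add algebra_simps)
qed

lemma sign_comp:
  fixes f :: "nat \<Rightarrow> 'a::field"
  assumes "ks \<in> compositions k r"
  shows "(-1) ^ (k - r) * (\<Prod>i<r. f (ks ! i)) = prod_list (map (\<lambda>m. (-1) ^ (m - 1) * f m) ks)"
proof -
  have l: "length ks = r" "\<forall>x\<in>set ks. x \<ge> 1" "sum_list ks = k" using assms by (auto simp: compositions_def)
  have rk: "r \<le> k" using comp_len[OF assms] .
  have kk: "(-1::'a) ^ k = (-1) ^ r * (-1) ^ (k - r)" using rk by (simp add: power_add[symmetric])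
  have "(-1) ^ r * prod_list (map (\<lambda>m. (-1) ^ (m - 1) * f m) ks) = (-1) ^ r * ((-1) ^ (k - r) * prod_list (map f ks))"
    using sign_list[OF l(2), of f] l kk by simp
  hence "prod_list (map (\<lambda>m. (-1) ^ (m - 1) * f m) ks) = (-1) ^ (k - r) * prod_list (map f ks)"
    by simp
  thus ?thesis using prod_nth[of f ks] l by simp
qed

lemma LHS_TT:
  fixes f :: "nat \<Rightarrow> 'a::field"
  assumes "1 \<le> k"
  shows "(\<Sum>r=1..k. (-1) ^ (k - r) * (\<Sum>ks\<in>compositions k r. \<Prod>i<r. f (ks ! i)))
     = TT (\<lambda>m. (-1) ^ (m - 1) * f m) k"
proof -
  have e: "{..k} = insert 0 {1..k}" by auto
  have "TT (\<lambda>m. (-1) ^ (m - 1) * f m) k = (\<Sum>r=1..k. SS (\<lambda>m. (-1) ^ (m - 1) * f m) k r)"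
    unfolding TT_def e using assms by (simp add: SS_def comp_0)
  also have "\<dots> = (\<Sum>r=1..k. (-1) ^ (k - r) * (\<Sum>ks\<in>compositions k r. \<Prod>i<r. f (ks ! i)))"
    unfolding SS_def sum_distrib_left
    by (intro sum.cong refl) (simp add: sign_comp)
  finally show ?thesis by simp
qed


lemma B_PP: "(\<Prod>j=1..m. (a * q ^ (j - 1) - b) / (1 - q ^ j)) = (-1) ^ m * PP q b a m"
proof -
  have "(\<Prod>j=1..m. (a * q ^ (j - 1) - b) / (1 - q ^ j)) = (\<Prod>j=1..m. (-1) * ((b - a * q ^ (j - 1)) / (1 - q ^ j)))"
    by (rule prod.cong) (auto simp: field_simps)
  also have "\<dots> = (\<Prod>j=1..m. (-1::'a)) * PP q b a m" by (simp only: prod.distrib PP_def)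
  also have "\<dots> = (-1) ^ m * PP q b a m" by simp
  finally show ?thesis .
qed

theorem mainTheorem14:
  fixes a b q :: "'a::field" and k :: nat
  assumes "k \<ge> 1"
    and "\<And>j. 1 \<le> j \<Longrightarrow> j \<le> k \<Longrightarrow> 1 - q ^ j \<noteq> 0"
  shows "(\<Sum>r=1..k. (-1) ^ (k - r) *
            (\<Sum>ks\<in>compositions k r. \<Prod>i<r. \<Prod>j=1..ks ! i.
               (a - b * q ^ (j - 1)) / (1 - q ^ j)))
          = (\<Prod>i=1..k. (a * q ^ (i - 1) - b) / (1 - q ^ i))
       \<and> (\<Sum>r=1..k. (-1) ^ (k - r) *
            (\<Sum>ks\<in>compositions k r. \<Prod>i<r. \<Prod>j=1..ks ! i.
               (a * q ^ (j - 1) - b) / (1 - q ^ j)))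
          = (\<Prod>i=1..k. (a - b * q ^ (i - 1)) / (1 - q ^ i))"
proof
  let ?A = "\<lambda>n. \<Prod>j=1..n. (a - b * q ^ (j - 1)) / (1 - q ^ j)"
  let ?B = "\<lambda>n. \<Prod>j=1..n. (a * q ^ (j - 1) - b) / (1 - q ^ j)"
  have A: "?A n = PP q a b n" for n by (simp add: PP_def)
  have B: "?B n = (-1) ^ n * PP q b a n" for n by (rule B_PP)
  have h1: "(\<Sum>m\<le>n. (-1) ^ m * ?A m * ?B (n - m)) = 0" if "1 \<le> n" "n \<le> k" for n
  proof -
    have "(\<Sum>m\<le>n. (-1) ^ m * ?A m * ?B (n - m)) = (\<Sum>m\<le>n. (-1) ^ n * (PP q a b m * PP q b a (n - m)))"
    proof (rule sum.cong[OF refl])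
      fix m assume "m \<in> {..n}"
      hence "(-1::'a) ^ m * (-1) ^ (n - m) = (-1) ^ n" by (simp add: power_add[symmetric])
      thus "(-1) ^ m * ?A m * ?B (n - m) = (-1) ^ n * (PP q a b m * PP q b a (n - m))"
        unfolding A B by (metis (no_types, lifting) mult.assoc mult.left_commute)
    qed
    also have "\<dots> = (-1) ^ n * CC q a b n" by (simp add: CC_def sum_distrib_left)
    also have "\<dots> = 0" using CC_zero[OF assms(2) that] by simp
    finally show ?thesis .
  qed
  have h2: "(\<Sum>m\<le>n. (-1) ^ m * ?B m * ?A (n - m)) = 0" if "1 \<le> n" "n \<le> k" for n
  proof -
    have "(\<Sum>m\<le>n. (-1) ^ m * ?B m * ?A (n - m)) = (\<Sum>m\<le>n. PP q b a m * PP q a b (n - m))"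
    proof (rule sum.cong[OF refl])
      fix m
      have "(-1::'a) ^ m * (-1) ^ m = 1" by (simp add: power_add[symmetric])
      thus "(-1) ^ m * ?B m * ?A (n - m) = PP q b a m * PP q a b (n - m)"
        unfolding A B by (metis (no_types, lifting) mult.assoc mult_1)
    qed
    also have "\<dots> = CC q b a n" by (simp add: CC_def)
    also have "\<dots> = 0" using CC_zero[OF assms(2) that] by simp
    finally show ?thesis .
  qed
  show "(\<Sum>r=1..k. (-1) ^ (k - r) * (\<Sum>ks\<in>compositions k r. \<Prod>i<r. ?A (ks ! i))) = ?B k"
    by (subst LHS_TT[OF assms(1), of ?A], rule generic[where K=k]) (use h1 in \<open>auto simp: PP_def\<close>)
  show "(\<Sum>r=1..k. (-1) ^ (k - r) * (\<Sum>ks\<in>compositions k r. \<Prod>i<r. ?B (ks ! i))) = ?A k"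
    by (subst LHS_TT[OF assms(1), of ?B], rule generic[where K=k]) (use h2 in \<open>auto simp: PP_def\<close>)
qed

end
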